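(* Let $f:\mathbb{R}^d\to\mathbb{R}$ be convex, $1\le p\le\infty$ and $\alpha\ge 1$, and let $W_\alpha(\mathbf{x}):=e^{-|\mathbf{x}|^\alpha}$. Assume that $fW_\alpha\in L_p(\mathbb{R}^d)$ if $1\le p<\infty$, or that $f\in C(\mathbb{R}^d)$ with $\lim_{|\mathbf{x}|\to\infty}f(\mathbf{x})W_\alpha(\mathbf{x})=0$ if $p=\infty$. Then for any $\varepsilon>0$ there exists a piecewise linear convex function $h$ such that \[ \|(f-h)W_\alpha\|_{L_p(\mathbb{R}^d)}<\varepsilon \] and \[ \omega(h,t,\mathbb{R}^d)\le Lt\quad\text{for any } t>0, \] where $L>0$ does not depend on $t$.
   Context: $|\cdot|$ is the Euclidean norm on $\mathbb{R}^d$. A function $g:\mathbb{R}^d\to\mathbb{R}$ is called piecewise linear convex if it is the pointwise maximum of finitely many linear (i.e. affine, degree $\le 1$ polynomial) functions on $\mathbb{R}^d$. For $g:M\to\mathbb{R}$, the modulus of continuity is $\omega(g,t,M):=\sup\{|g(\mathbf{x}')-g(\mathbf{x}'')|:\mathbf{x}',\mathbf{x}''\in M,\ |\mathbf{x}'-\mathbf{x}''|<t\}$. *)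

theory Defs
  imports "HOL-Analysis.Analysis"
begin

definition W :: "real \<Rightarrow> 'a::euclidean_space \<Rightarrow> real" where
  "W \<alpha> x = exp (- (norm x powr \<alpha>))"

definition Lp_norm :: "ennreal \<Rightarrow> ('a::euclidean_space \<Rightarrow> real) \<Rightarrow> ennreal" where
  "Lp_norm p g =
     (if p = \<infinity> then (SUP x. ennreal \<bar>g x\<bar>)
      else (let I = (\<integral>\<^sup>+ x. ennreal (\<bar>g x\<bar> powr enn2real p) \<partial>lebesgue)
            in if I = \<infinity> then \<infinity> else ennreal ((enn2real I) powr (1 / enn2real p))))"

definition in_Lp :: "real \<Rightarrow> ('a::euclidean_space \<Rightarrow> real) \<Rightarrow> bool" where
  "in_Lp p g \<longleftrightarrow> g \<in> borel_measurable lebesgue \<and>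
     (\<integral>\<^sup>+ x. ennreal (\<bar>g x\<bar> powr p) \<partial>lebesgue) < \<infinity>"

definition pw_linear_convex :: "('a::euclidean_space \<Rightarrow> real) \<Rightarrow> bool" where
  "pw_linear_convex h \<longleftrightarrow> (\<exists>n::nat. \<exists>a::nat \<Rightarrow> 'a. \<exists>b::nat \<Rightarrow> real. n \<ge> 1 \<and>
     h = (\<lambda>x. Max {a i \<bullet> x + b i | i. i < n}))"

definition modcont :: "('a::euclidean_space \<Rightarrow> real) \<Rightarrow> real \<Rightarrow> 'a set \<Rightarrow> ereal" where
  "modcont g t M = (SUP xy \<in> {(x', x''). x' \<in> M \<and> x'' \<in> M \<and> norm (x' - x'') < t}.
      ereal \<bar>g (fst xy) - g (snd xy)\<bar>)"

end

theory Submission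
  imports Defs
begin


lemma pw_from_set:
  fixes F :: "('a::euclidean_space \<times> real) set"
  assumes "finite F" "F \<noteq> {}"
  shows "pw_linear_convex (\<lambda>x. Max ((\<lambda>q. fst q \<bullet> x + snd q) ` F))"
proof -
  obtain g where g: "bij_betw g {0..<card F} F" using ex_bij_betw_nat_finite[OF assms(1)] by blast
  have ge: "g ` {..<card F} = F" using g by (simp add: bij_betw_def lessThan_atLeast0)
  have "card F \<ge> 1" using assms card_0_eq by fastforce
  moreover have "(\<lambda>x. Max ((\<lambda>q. fst q \<bullet> x + snd q) ` F)) =
     (\<lambda>x. Max {(fst \<circ> g) i \<bullet> x + (snd \<circ> g) i | i. i < card F})"
  proof
    fix x
    have "{(fst \<circ> g) i \<bullet> x + (snd \<circ> g) i | i. i < card F} = (\<lambda>q. fst q \<bullet> x + snd q) ` (g ` {..<card F})"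
      by auto
    then show "Max ((\<lambda>q. fst q \<bullet> x + snd q) ` F) = Max {(fst \<circ> g) i \<bullet> x + (snd \<circ> g) i | i. i < card F}"
      using ge by simp
  qed
  ultimately show ?thesis unfolding pw_linear_convex_def by blast
qed



lemma minorant:
  fixes f :: "'a::euclidean_space \<Rightarrow> real"
  assumes cv: "convex_on UNIV f" and ct: "continuous_on UNIV f" and d: "\<delta> > 0"
  shows "\<exists>u b. (\<forall>x. u \<bullet> x + b \<le> f x) \<and> f y - \<delta> < u \<bullet> y + b"
proof -
  define S where "S = {z :: 'a \<times> real. f (fst z) \<le> snd z}"
  have "convex S" unfolding S_def
    using convex_epigraph[of UNIV f] cv by (simp add: epigraph_def)
  moreover have "closed S" unfolding S_def
    by (intro closed_Collect_le continuous_intros continuous_on_compose2[OF ct]) auto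
  moreover have "(y, f y - \<delta>) \<notin> S" using d by (simp add: S_def)
  ultimately obtain a c where ac: "a \<bullet> (y, f y - \<delta>) < c" "\<forall>z\<in>S. a \<bullet> z > c"
    using separating_hyperplane_closed_point by blast
  obtain u k where a: "a = (u, k)" by (cases a)
  have h1: "u \<bullet> x + k * t > c" if "f x \<le> t" for x t
    using ac(2) that by (auto simp: S_def a inner_Pair)
  have h0: "u \<bullet> y + k * (f y - \<delta>) < c" using ac(1) by (simp add: a inner_Pair)
  have kpos: "k > 0"
  proof (rule ccontr)
    assume "\<not> k > 0"
    then have "k \<le> 0" by simp
    have "u \<bullet> y + k * f y > c" using h1[of y "f y"] by simp
    moreover have "k * f y \<le> k * (f y - \<delta>)" using \<open>k \<le> 0\<close> d by (simp add: mult_left_mono_neg)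
    ultimately show False using h0 by linarith
  qed
  have A: "(- u /\<^sub>R k) \<bullet> x + c / k \<le> f x" for x
  proof -
    have "u \<bullet> x + k * f x > c" using h1[of x "f x"] by simp
    then have "c - u \<bullet> x < k * f x" by simp
    then have "(c - u \<bullet> x) / k < f x" using kpos by (simp add: divide_less_eq mult.commute)
    then show ?thesis using kpos by (simp add: inner_scaleR_left inner_minus_left field_simps)
  qed
  have B: "f y - \<delta> < (- u /\<^sub>R k) \<bullet> y + c / k"
  proof -
    have "k * (f y - \<delta>) < c - u \<bullet> y" using h0 by simp
    then have "f y - \<delta> < (c - u \<bullet> y) / k" using kpos by (simp add: less_divide_eq mult.commute)
    then show ?thesis using kpos by (simp add: inner_scaleR_left inner_minus_left field_simps)
  qed
  show ?thesis using A B by blast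
qed



lemma max_lip:
  fixes F :: "('a::euclidean_space \<times> real) set"
  assumes "finite F" "F \<noteq> {}"
  defines "h \<equiv> (\<lambda>x. Max ((\<lambda>q. fst q \<bullet> x + snd q) ` F))"
  shows "h x - h y \<le> (\<Sum>q\<in>F. norm (fst q)) * norm (x - y)"
proof -
  have "h x \<in> (\<lambda>q. fst q \<bullet> x + snd q) ` F" unfolding h_def using assms by (intro Max_in) auto
  then obtain q where q: "q \<in> F" "h x = fst q \<bullet> x + snd q" by auto
  have "fst q \<bullet> y + snd q \<le> h y" unfolding h_def using assms q(1) by (intro Max_ge) auto
  moreover have "fst q \<bullet> x = fst q \<bullet> y + fst q \<bullet> (x - y)" by (simp add: inner_diff_right)
  moreover have "fst q \<bullet> (x - y) \<le> norm (fst q) * norm (x - y)"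
    by (meson Cauchy_Schwarz_ineq2 abs_le_D1)
  moreover have "norm (fst q) \<le> (\<Sum>q\<in>F. norm (fst q))"
    using assms(1) q(1) by (intro member_le_sum) auto
  ultimately have "h x \<le> h y + (\<Sum>q\<in>F. norm (fst q)) * norm (x - y)"
    using q(2) by (smt (verit, best) mult_right_mono norm_ge_zero)
  then show ?thesis by simp
qed

lemma modcont_le:
  assumes "\<And>x y. \<bar>h x - h y\<bar> \<le> L * norm (x - y)" "L \<ge> 0"
  shows "modcont h t UNIV \<le> ereal (L * t)"
  unfolding modcont_def
proof (rule SUP_least)
  fix xy :: "'a \<times> 'a" assume "xy \<in> {(x', x''). x' \<in> UNIV \<and> x'' \<in> UNIV \<and> norm (x' - x'') < t}"
  then have "norm (fst xy - snd xy) < t" by auto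
  then have "\<bar>h (fst xy) - h (snd xy)\<bar> \<le> L * t"
    using assms(1)[of "fst xy" "snd xy"] assms(2) by (smt (verit) mult_left_mono)
  then show "ereal \<bar>h (fst xy) - h (snd xy)\<bar> \<le> ereal (L * t)" by simp
qed



lemma approx:
  fixes f :: "'a::euclidean_space \<Rightarrow> real"
  assumes cv: "convex_on UNIV f" and ct: "continuous_on UNIV f"
    and m0: "\<forall>x. u0 \<bullet> x + b0 \<le> f x" and d: "\<delta> > 0"
  shows "\<exists>h. pw_linear_convex h \<and> (\<forall>x. h x \<le> f x) \<and> (\<forall>x. u0 \<bullet> x + b0 \<le> h x)
     \<and> (\<forall>x\<in>cball 0 R. f x - h x < \<delta>) \<and> (\<exists>L>0. \<forall>t>0. modcont h t UNIV \<le> ereal (L * t))"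
proof -
  have "\<forall>y. \<exists>u b. (\<forall>x. u \<bullet> x + b \<le> f x) \<and> f y - \<delta> < u \<bullet> y + b"
    using minorant[OF cv ct d] by blast
  then obtain U B where UB: "\<And>y x. U y \<bullet> x + B y \<le> f x" "\<And>y. f y - \<delta> < U y \<bullet> y + B y"
    by metis
  define Op where "Op y = {x. f x - (U y \<bullet> x + B y) < \<delta>}" for y
  have opOp: "open (Op y)" for y unfolding Op_def
    by (intro open_Collect_less continuous_intros ct)
  have "cball 0 R \<subseteq> (\<Union>y\<in>cball 0 R. Op y)" proof fix x assume x: "x \<in> cball (0::'a) R" have "x \<in> Op x" using UB(2)[of x] by (simp add: Op_def) then show "x \<in> (\<Union>y\<in>cball 0 R. Op y)" using x by blast qed
  then obtain T where T: "T \<subseteq> cball 0 R" "finite T" "cball 0 R \<subseteq> (\<Union>y\<in>T. Op y)"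
    by (rule compactE_image[of "cball 0 R" "cball 0 R" Op, OF compact_cball opOp]) blast+
  define F where "F = insert (u0, b0) ((\<lambda>y. (U y, B y)) ` T)"
  have F: "finite F" "F \<noteq> {}" using T(2) by (auto simp: F_def)
  define h where "h = (\<lambda>x. Max ((\<lambda>q. fst q \<bullet> x + snd q) ` F))"
  have ge: "fst q \<bullet> x + snd q \<le> h x" if "q \<in> F" for q x
    unfolding h_def using F that by (intro Max_ge) auto
  have "pw_linear_convex h" unfolding h_def by (rule pw_from_set[OF F])
  moreover have "h x \<le> f x" for x
    unfolding h_def using F m0 UB(1) by (subst Max_le_iff) (auto simp: F_def)
  moreover have "u0 \<bullet> x + b0 \<le> h x" for x using ge[of "(u0,b0)"] by (simp add: F_def)
  moreover have "f x - h x < \<delta>" if xc: "x \<in> cball 0 R" for x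
  proof -
    obtain y where y: "y \<in> T" "x \<in> Op y" using T(3) xc by blast
    have "U y \<bullet> x + B y \<le> h x" using ge[of "(U y, B y)" x] y(1) by (simp add: F_def)
    then show ?thesis using y(2) by (simp add: Op_def)
  qed
  moreover have "\<exists>L>0. \<forall>t>0. modcont h t UNIV \<le> ereal (L * t)"
  proof (intro exI conjI allI impI)
    define L where "L = 1 + (\<Sum>q\<in>F. norm (fst q))"
    have L0: "L > 0" unfolding L_def by (smt (verit) norm_ge_zero sum_nonneg)
    have "\<bar>h x - h y\<bar> \<le> L * norm (x - y)" for x y
    proof -
      have "h x - h y \<le> (\<Sum>q\<in>F. norm (fst q)) * norm (x - y)"
        unfolding h_def by (rule max_lip[OF F])
      moreover have "h y - h x \<le> (\<Sum>q\<in>F. norm (fst q)) * norm (y - x)"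
        unfolding h_def by (rule max_lip[OF F])
      moreover have "(\<Sum>q\<in>F. norm (fst q)) * norm (x - y) \<le> L * norm (x - y)"
        unfolding L_def by (simp add: mult_right_mono)
      ultimately show ?thesis by (simp add: norm_minus_commute abs_le_iff)
    qed
    then show "modcont h t UNIV \<le> ereal (L * t)" for t using L0 by (intro modcont_le) auto
    show "L > 0" by (rule L0)
  qed
  ultimately show ?thesis by blast
qed



lemma pow_le_exp:
  fixes y :: real and n :: nat
  assumes "y \<ge> 0" "n \<ge> 1"
  shows "y ^ n \<le> (4 * real n) ^ n * exp (y / 4)"
proof -
  have "y \<le> 4 * real n * (1 + y / (4 * real n))" using assms by (simp add: field_simps)
  also have "1 + y / (4 * real n) \<le> exp (y / (4 * real n))" by (rule exp_ge_add_one_self)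
  finally have "y \<le> 4 * real n * exp (y / (4 * real n))" using assms by (simp add: mult_left_mono)
  then have "y ^ n \<le> (4 * real n * exp (y / (4 * real n))) ^ n" using assms by (intro power_mono) auto
  also have "\<dots> = (4 * real n) ^ n * exp (y / (4 * real n)) ^ n" by (simp add: power_mult_distrib)
  also have "exp (y / (4 * real n)) ^ n = exp (y / 4)"
    using assms by (simp add: exp_of_nat_mult[symmetric])
  finally show ?thesis .
qed

lemma exp_norm_integrable:
  "(\<integral>\<^sup>+ x. ennreal (exp (- norm (x::'a::euclidean_space) / 2)) \<partial>lborel) < \<infinity>"
proof -
  define D where "D = DIM('a)"
  have D1: "D \<ge> 1" unfolding D_def by (simp add: DIM_positive Suc_leI)
  define V where "V = unit_ball_vol (real D)"
  have V0: "V \<ge> 0" unfolding V_def by (simp add: unit_ball_vol_nonneg)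
  define a where "a k = exp (- real k / 2) * (V * (real k + 1) ^ D)" for k :: nat
  have a0: "a k \<ge> 0" for k unfolding a_def using V0 by simp
  define C where "C = V * (4 * real D) ^ D * exp (1/4)"
  have abnd: "a k \<le> C * exp (-1/4) ^ k" for k
  proof -
    have "(real k + 1) ^ D \<le> (4 * real D) ^ D * exp ((real k + 1) / 4)"
      using pow_le_exp[of "real k + 1" D] D1 by simp
    then have "a k \<le> exp (- real k / 2) * (V * ((4 * real D) ^ D * exp ((real k + 1) / 4)))"
      unfolding a_def using V0 by (intro mult_left_mono) auto
    also have "\<dots> = C * exp (- real k / 4)"
      unfolding C_def by (simp add: field_simps exp_add[symmetric])
    also have "exp (- real k / 4) = exp (-1/4) ^ k" by (simp add: exp_of_nat_mult[symmetric])
    finally show ?thesis .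
  qed
  have "summable (\<lambda>k. C * exp (-1/4) ^ k)" by (intro summable_mult summable_geometric) simp
  then have sa: "summable a"
    by (rule summable_comparison_test'[where N=0]) (use abnd a0 in simp)
  have pt: "ennreal (exp (- norm x / 2)) \<le> (\<Sum>k. ennreal (exp (- real k / 2)) * indicator (cball (0::'a) (real k + 1)) x)" for x
  proof -
    define k where "k = nat \<lfloor>norm x\<rfloor>"
    have fl: "real_of_int \<lfloor>norm x\<rfloor> \<le> norm x" "norm x < real_of_int \<lfloor>norm x\<rfloor> + 1" "0 \<le> \<lfloor>norm x\<rfloor>"
      by (simp_all add: floor_le_iff)
    have rk: "real k = real_of_int \<lfloor>norm x\<rfloor>" unfolding k_def using fl(3) by simp
    have k1: "real k \<le> norm x" "norm x \<le> real k + 1" using fl rk by linarith+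
    have "ennreal (exp (- norm x / 2)) \<le> ennreal (exp (- real k / 2)) * indicator (cball (0::'a) (real k + 1)) x"
      using k1 by (simp add: indicator_def)
    also have "\<dots> \<le> (\<Sum>k. ennreal (exp (- real k / 2)) * indicator (cball (0::'a) (real k + 1)) x)"
      using sum_le_suminf[OF summableI, of "{k}"] by simp
    finally show ?thesis .
  qed
  have "(\<integral>\<^sup>+ x. ennreal (exp (- norm (x::'a) / 2)) \<partial>lborel)
      \<le> (\<integral>\<^sup>+ x. (\<Sum>k. ennreal (exp (- real k / 2)) * indicator (cball (0::'a) (real k + 1)) x) \<partial>lborel)"
    by (intro nn_integral_mono pt)
  also have "\<dots> = (\<Sum>k. \<integral>\<^sup>+ x. ennreal (exp (- real k / 2)) * indicator (cball (0::'a) (real k + 1)) x \<partial>lborel)"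
    by (rule nn_integral_suminf) (intro borel_measurable_times_ennreal borel_measurable_const borel_measurable_indicator, simp)
  also have "\<dots> = (\<Sum>k. ennreal (a k))"
    by (simp add: nn_integral_cmult_indicator emeasure_cball a_def V_def D_def ennreal_mult')
  also have "\<dots> = ennreal (\<Sum>k. a k)" using a0 sa by (rule suminf_ennreal2)
  also have "\<dots> < \<infinity>" by simp
  finally show ?thesis .
qed



lemma W_pos: "W \<alpha> x > 0" by (simp add: W_def)
lemma W_le1: "W \<alpha> x \<le> 1" by (simp add: W_def)

lemma normpowr_ge: assumes "\<alpha> \<ge> 1" shows "norm x powr \<alpha> \<ge> norm x - 1"
proof (cases "norm x \<ge> 1")
  case True
  then have "norm x powr 1 \<le> norm x powr \<alpha>" using assms by (intro powr_mono) auto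
  then show ?thesis using True by simp
next
  case False
  then show ?thesis by (smt (verit) powr_ge_zero)
qed

lemma affW_bound:
  fixes u :: "'a::euclidean_space"
  assumes P: "P \<ge> 1" and al: "\<alpha> \<ge> 1"
  shows "\<exists>K\<ge>0. \<forall>x. (\<bar>u \<bullet> x + b\<bar> * W \<alpha> x) powr P \<le> K * exp (- norm x / 2)"
proof -
  define A where "A = (norm u + \<bar>b\<bar>) * 4 * P"
  define K where "K = A powr P * exp 1"
  have A0: "A \<ge> 0" unfolding A_def using P by simp
  have "(\<bar>u \<bullet> x + b\<bar> * W \<alpha> x) powr P \<le> K * exp (- norm x / 2)" for x
  proof -
    define t where "t = norm x"
    have t0: "t \<ge> 0" unfolding t_def by simp
    have "\<bar>u \<bullet> x + b\<bar> \<le> norm u * t + \<bar>b\<bar>"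
      unfolding t_def by (smt (verit) Cauchy_Schwarz_ineq2)
    also have "\<dots> \<le> (norm u + \<bar>b\<bar>) * (1 + t)" using t0 by (simp add: algebra_simps)
    also have "\<dots> \<le> (norm u + \<bar>b\<bar>) * (4 * P + t)" using P by (intro mult_left_mono) auto
    also have "\<dots> = A * (1 + t / (4 * P))" unfolding A_def using P by (simp add: field_simps)
    finally have e1: "\<bar>u \<bullet> x + b\<bar> \<le> A * (1 + t / (4 * P))" .
    have "(1 + t / (4 * P)) powr P \<le> exp (t / (4 * P)) powr P"
      using t0 P by (intro powr_mono2) (auto simp: exp_ge_add_one_self)
    also have "\<dots> = exp (t / 4)" using P by (simp add: exp_powr_real)
    finally have e2: "(1 + t / (4 * P)) powr P \<le> exp (t / 4)" .
    have "W \<alpha> x powr P = exp (- (P * t powr \<alpha>))" unfolding W_def t_def by (simp add: exp_powr_real)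
    also have "\<dots> \<le> exp (1 - t)"
    proof -
      have "t powr \<alpha> \<ge> t - 1" unfolding t_def using normpowr_ge[OF al] .
      moreover have "P * t powr \<alpha> \<ge> t powr \<alpha>" using P by (simp add: mult_le_cancel_right1)
      ultimately show ?thesis by simp
    qed
    finally have e3: "W \<alpha> x powr P \<le> exp (1 - t)" .
    have "(\<bar>u \<bullet> x + b\<bar> * W \<alpha> x) powr P = \<bar>u \<bullet> x + b\<bar> powr P * W \<alpha> x powr P"
      using W_pos[of \<alpha> x] by (simp add: powr_mult)
    also have "\<dots> \<le> (A * (1 + t / (4 * P))) powr P * exp (1 - t)"
      using e1 e3 P by (intro mult_mono powr_mono2) auto
    also have "(A * (1 + t / (4 * P))) powr P = A powr P * (1 + t / (4 * P)) powr P"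
      using A0 t0 P by (simp add: powr_mult)
    also have "A powr P * (1 + t / (4 * P)) powr P * exp (1 - t) \<le> A powr P * exp (t / 4) * exp (1 - t)"
      using e2 by (intro mult_right_mono mult_left_mono) auto
    also have "A powr P * exp (t / 4) * exp (1 - t) = K * exp (- (3 * t / 4))"
      unfolding K_def by (simp add: exp_add[symmetric] field_simps)
    also have "\<dots> \<le> K * exp (- t / 2)" unfolding K_def using t0 by (intro mult_left_mono) auto
    finally show ?thesis unfolding t_def .
  qed
  moreover have "K \<ge> 0" unfolding K_def by simp
  ultimately show ?thesis by blast
qed



lemma tail_small:
  fixes g :: "'a::euclidean_space \<Rightarrow> ennreal"
  assumes gm: "g \<in> borel_measurable lborel" and fin: "(\<integral>\<^sup>+ x. g x \<partial>lborel) < \<infinity>" and eta: "\<eta> > 0"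
  shows "\<exists>R\<ge>0. (\<integral>\<^sup>+ x. g x * indicator (- cball 0 R) x \<partial>lborel) < \<eta>"
proof -
  define f where "f i x = g x * indicator (- cball (0::'a) (real i)) x" for i x
  have mono: "AE x in lborel. f (Suc i) x \<le> f i x" for i
    unfolding f_def by (intro AE_I2) (auto simp: indicator_def)
  have meas: "f i \<in> borel_measurable lborel" for i unfolding f_def using gm by simp
  have f0: "(\<integral>\<^sup>+ x. f 0 x \<partial>lborel) < \<infinity>"
    using fin by (rule le_less_trans[rotated]) (auto intro!: nn_integral_mono simp: f_def indicator_def)
  have "(\<integral>\<^sup>+ x. (INF i. f i x) \<partial>lborel) = (INF i. integral\<^sup>N lborel (f i))"
    by (rule nn_integral_monotone_convergence_INF_AE'[OF mono meas f0])
  moreover have "(INF i. f i x) = 0" for x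
  proof -
    obtain n :: nat where "norm x < real n" using reals_Archimedean2 by blast
    then have "f n x = 0" by (simp add: f_def)
    then show ?thesis by (metis INF_lower bot.extremum_uniqueI iso_tuple_UNIV_I zero_ennreal_def bot_ennreal)
  qed
  ultimately have "(INF i. integral\<^sup>N lborel (f i)) = 0" by simp
  then have "(INF i. integral\<^sup>N lborel (f i)) < \<eta>" using eta by simp
  then obtain i where "integral\<^sup>N lborel (f i) < \<eta>" by (auto simp: INF_less_iff)
  then show ?thesis unfolding f_def by (intro exI[of _ "real i"]) auto
qed



lemma common_setup:
  fixes f :: "'a::euclidean_space \<Rightarrow> real"
  assumes cv: "convex_on UNIV f"
  shows "continuous_on UNIV f" "\<exists>u0 b0. \<forall>x. u0 \<bullet> x + b0 \<le> f x"
proof -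
  show ct: "continuous_on UNIV f" by (rule convex_on_continuous[OF open_UNIV cv])
  show "\<exists>u0 b0. \<forall>x. u0 \<bullet> x + b0 \<le> f x"
    using minorant[OF cv ct, of 1 0] by auto
qed

lemma err_bounds:
  assumes "\<forall>x. h x \<le> f x" "\<forall>x. u0 \<bullet> x + b0 \<le> h x"
  shows "0 \<le> (f x - h x) * W \<alpha> x" "(f x - h x) * W \<alpha> x \<le> (f x - (u0 \<bullet> x + b0)) * W \<alpha> x"
    "(f x - h x) * W \<alpha> x \<le> f x - h x"
proof -
  have w: "0 < W \<alpha> x" "W \<alpha> x \<le> 1" by (rule W_pos, rule W_le1)
  show "0 \<le> (f x - h x) * W \<alpha> x" using assms w by simp
  show "(f x - h x) * W \<alpha> x \<le> (f x - (u0 \<bullet> x + b0)) * W \<alpha> x"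
  proof -
    have "u0 \<bullet> x + b0 \<le> h x" using assms(2) by blast
    then show ?thesis using w by (intro mult_right_mono) auto
  qed
  show "(f x - h x) * W \<alpha> x \<le> f x - h x"
    using assms w by (simp add: mult_left_le)
qed

lemma case_inf:
  fixes f :: "'a::euclidean_space \<Rightarrow> real"
  assumes cv: "convex_on UNIV f" and al: "1 \<le> \<alpha>"
    and lim: "((\<lambda>x. f x * W \<alpha> x) \<longlongrightarrow> 0) at_infinity" and e: "\<epsilon> > 0"
  shows "\<exists>h. pw_linear_convex h \<and> Lp_norm \<infinity> (\<lambda>x. (f x - h x) * W \<alpha> x) < ennreal \<epsilon> \<and>
           (\<exists>L>0. \<forall>t>0. modcont h t UNIV \<le> ereal (L * t))"
proof -
  have ct: "continuous_on UNIV f" using common_setup[OF cv] by simp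
  obtain u0 b0 where m0: "\<forall>x. u0 \<bullet> x + b0 \<le> f x" using common_setup[OF cv] by blast
  obtain K where K: "K \<ge> 0" "\<forall>x. (\<bar>u0 \<bullet> x + b0\<bar> * W \<alpha> x) powr 1 \<le> K * exp (- norm x / 2)"
    using affW_bound[of 1 \<alpha> u0 b0] al by auto
  have ex0: "((\<lambda>x::'a. K * exp (- norm x / 2)) \<longlongrightarrow> 0) at_infinity"
  proof -
    have "((\<lambda>t::real. K * exp (- t / 2)) \<longlongrightarrow> 0) at_top" by real_asymp
    then show ?thesis using filterlim_compose[OF _ filterlim_norm_at_top] by blast
  qed
  have l0: "((\<lambda>x. (u0 \<bullet> x + b0) * W \<alpha> x) \<longlongrightarrow> 0) at_infinity"
  proof (rule Lim_null_comparison[OF _ ex0])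
    show "\<forall>\<^sub>F x in at_infinity. norm ((u0 \<bullet> x + b0) * W \<alpha> x) \<le> K * exp (- norm x / 2)"
      using K(2) W_pos[of \<alpha>] by (intro always_eventually allI) (simp add: abs_mult)
  qed
  define G where "G x = (f x - (u0 \<bullet> x + b0)) * W \<alpha> x" for x
  have "(G \<longlongrightarrow> 0 - 0) at_infinity" unfolding G_def left_diff_distrib
    by (intro tendsto_diff lim l0)
  then have "eventually (\<lambda>x. dist (G x) 0 < \<epsilon>/2) at_infinity" using e by (intro tendstoD) auto
  then obtain R where R0: "\<forall>x. R \<le> norm x \<longrightarrow> dist (G x) 0 < \<epsilon>/2" unfolding eventually_at_infinity by blast
  have R: "\<bar>G x\<bar> < \<epsilon>/2" if "R \<le> norm x" for x using R0 that by simp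
  obtain h where h: "pw_linear_convex h" "\<forall>x. h x \<le> f x" "\<forall>x. u0 \<bullet> x + b0 \<le> h x"
    "\<forall>x\<in>cball 0 R. f x - h x < \<epsilon>/2" "\<exists>L>0. \<forall>t>0. modcont h t UNIV \<le> ereal (L * t)"
    using approx[OF cv ct m0, of "\<epsilon>/2" R] e by auto
  have pt: "\<bar>(f x - h x) * W \<alpha> x\<bar> \<le> \<epsilon>/2" for x
  proof (cases "norm x \<le> R")
    case True
    then have "f x - h x < \<epsilon>/2" using h(4) by auto
    then show ?thesis using err_bounds[OF h(2,3), of x \<alpha>] by auto
  next
    case False
    then show ?thesis using err_bounds[OF h(2,3), of x \<alpha>] R[of x] by (auto simp: G_def)
  qed
  have "Lp_norm \<infinity> (\<lambda>x. (f x - h x) * W \<alpha> x) \<le> ennreal (\<epsilon>/2)"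
    unfolding Lp_norm_def using pt by (auto intro!: SUP_least ennreal_leI)
  also have "\<dots> < ennreal \<epsilon>" using e by (intro ennreal_lessI) auto
  finally show ?thesis using h(1,5) by blast
qed



lemma powr_add_le:
  fixes a b P :: real
  assumes "a \<ge> 0" "b \<ge> 0" "P > 0"
  shows "(a + b) powr P \<le> 2 powr P * (a powr P + b powr P)"
proof -
  have "(a + b) powr P \<le> (2 * max a b) powr P" using assms by (intro powr_mono2) auto
  also have "\<dots> = 2 powr P * max a b powr P" using assms by (simp add: powr_mult)
  also have "max a b powr P \<le> a powr P + b powr P" by (simp add: max_def)
  finally show ?thesis by (simp add: mult_left_mono)
qed

lemma W_meas: "W \<alpha> \<in> borel_measurable borel"
  unfolding W_def by measurable

lemma G_integrable:
  fixes f :: "'a::euclidean_space \<Rightarrow> real"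
  assumes ct: "continuous_on UNIV f" and al: "1 \<le> \<alpha>" and P: "1 \<le> P"
    and fin: "(\<integral>\<^sup>+ x. ennreal (\<bar>f x * W \<alpha> x\<bar> powr P) \<partial>lborel) < \<infinity>"
    and m0: "\<forall>x. u0 \<bullet> x + b0 \<le> f x"
  shows "(\<integral>\<^sup>+ x. ennreal (((f x - (u0 \<bullet> x + b0)) * W \<alpha> x) powr P) \<partial>lborel) < \<infinity>"
proof -
  obtain K where K: "K \<ge> 0" "\<forall>x. (\<bar>u0 \<bullet> x + b0\<bar> * W \<alpha> x) powr P \<le> K * exp (- norm x / 2)"
    using affW_bound[OF P al, of u0 b0] by auto
  have fm: "f \<in> borel_measurable borel" by (rule borel_measurable_continuous_onI[OF ct])
  note [measurable] = fm W_meas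
  have pt: "ennreal (((f x - (u0 \<bullet> x + b0)) * W \<alpha> x) powr P)
     \<le> ennreal (2 powr P) * (ennreal (\<bar>f x * W \<alpha> x\<bar> powr P) + ennreal K * ennreal (exp (- norm x / 2)))" for x
  proof -
    have w: "W \<alpha> x > 0" by (rule W_pos)
    have "(f x - (u0 \<bullet> x + b0)) * W \<alpha> x \<le> \<bar>f x * W \<alpha> x\<bar> + \<bar>u0 \<bullet> x + b0\<bar> * W \<alpha> x"
    proof -
      have "\<bar>(u0 \<bullet> x + b0) * W \<alpha> x\<bar> = \<bar>u0 \<bullet> x + b0\<bar> * W \<alpha> x" using w by (simp add: abs_mult)
      moreover have "(f x - (u0 \<bullet> x + b0)) * W \<alpha> x = f x * W \<alpha> x - (u0 \<bullet> x + b0) * W \<alpha> x"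
        by (simp add: left_diff_distrib)
      ultimately show ?thesis by linarith
    qed
    moreover have "(f x - (u0 \<bullet> x + b0)) * W \<alpha> x \<ge> 0" using m0 w by simp
    ultimately have "((f x - (u0 \<bullet> x + b0)) * W \<alpha> x) powr P \<le> (\<bar>f x * W \<alpha> x\<bar> + \<bar>u0 \<bullet> x + b0\<bar> * W \<alpha> x) powr P"
      using P by (intro powr_mono2) auto
    also have "\<dots> \<le> 2 powr P * (\<bar>f x * W \<alpha> x\<bar> powr P + (\<bar>u0 \<bullet> x + b0\<bar> * W \<alpha> x) powr P)"
      using P w by (intro powr_add_le) auto
    also have "\<dots> \<le> 2 powr P * (\<bar>f x * W \<alpha> x\<bar> powr P + K * exp (- norm x / 2))"
      using K(2) by (intro mult_left_mono add_left_mono) auto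
    finally have "((f x - (u0 \<bullet> x + b0)) * W \<alpha> x) powr P \<le> 2 powr P * (\<bar>f x * W \<alpha> x\<bar> powr P + K * exp (- norm x / 2))" .
    then have "ennreal (((f x - (u0 \<bullet> x + b0)) * W \<alpha> x) powr P) \<le> ennreal (2 powr P * (\<bar>f x * W \<alpha> x\<bar> powr P + K * exp (- norm x / 2)))"
      by (rule ennreal_leI)
    also have "\<dots> = ennreal (2 powr P) * (ennreal (\<bar>f x * W \<alpha> x\<bar> powr P) + ennreal K * ennreal (exp (- norm x / 2)))"
      using K(1) by (simp add: ennreal_mult ennreal_plus)
    finally show ?thesis .
  qed
  have "(\<integral>\<^sup>+ x. ennreal (((f x - (u0 \<bullet> x + b0)) * W \<alpha> x) powr P) \<partial>lborel)
     \<le> (\<integral>\<^sup>+ x. ennreal (2 powr P) * (ennreal (\<bar>f x * W \<alpha> x\<bar> powr P) + ennreal K * ennreal (exp (- norm x / 2))) \<partial>lborel)"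
    by (intro nn_integral_mono pt)
  also have "\<dots> = ennreal (2 powr P) * ((\<integral>\<^sup>+ x. ennreal (\<bar>f x * W \<alpha> x\<bar> powr P) \<partial>lborel) + ennreal K * (\<integral>\<^sup>+ x. ennreal (exp (- norm (x::'a) / 2)) \<partial>lborel))"
    by (simp add: nn_integral_cmult nn_integral_add)
  also have "\<dots> < \<infinity>"
    using fin exp_norm_integrable[where 'a='a]
    by (simp add: ennreal_mult_less_top less_top[symmetric] ennreal_mult_eq_top_iff)
  finally show ?thesis .
qed



lemma case_fin:
  fixes f :: "'a::euclidean_space \<Rightarrow> real" and p :: ennreal
  assumes cv: "convex_on UNIV f" and al: "1 \<le> \<alpha>" and pinf: "p \<noteq> \<infinity>" and p1: "1 \<le> p"
    and Lp: "in_Lp (enn2real p) (\<lambda>x. f x * W \<alpha> x)" and e: "\<epsilon> > 0"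
  shows "\<exists>h. pw_linear_convex h \<and> Lp_norm p (\<lambda>x. (f x - h x) * W \<alpha> x) < ennreal \<epsilon> \<and>
           (\<exists>L>0. \<forall>t>0. modcont h t UNIV \<le> ereal (L * t))"
proof -
  define P where "P = enn2real p"
  have P1: "P \<ge> 1" unfolding P_def using enn2real_mono[OF p1] pinf by (simp add: top.not_eq_extremum)
  have ct: "continuous_on UNIV f" using common_setup[OF cv] by simp
  obtain u0 b0 where m0: "\<forall>x. u0 \<bullet> x + b0 \<le> f x" using common_setup[OF cv] by blast
  have fm: "f \<in> borel_measurable borel" by (rule borel_measurable_continuous_onI[OF ct])
  note [measurable] = fm W_meas
  have fin: "(\<integral>\<^sup>+ x. ennreal (\<bar>f x * W \<alpha> x\<bar> powr P) \<partial>lborel) < \<infinity>"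
    using Lp unfolding in_Lp_def P_def by (simp add: nn_integral_completion)
  define G where "G x = ennreal (((f x - (u0 \<bullet> x + b0)) * W \<alpha> x) powr P)" for x
  have Gint: "(\<integral>\<^sup>+ x. G x \<partial>lborel) < \<infinity>" unfolding G_def using G_integrable[OF ct al P1 fin m0] .
  have Gm: "G \<in> borel_measurable lborel" unfolding G_def by measurable
  have ep: "ennreal (\<epsilon> powr P / 2) > 0" using e by simp
  obtain R where R: "R \<ge> 0" "(\<integral>\<^sup>+ x. G x * indicator (- cball 0 R) x \<partial>lborel) < ennreal (\<epsilon> powr P / 2)"
    using tail_small[OF Gm Gint ep] by blast
  define V where "V = unit_ball_vol (real DIM('a)) * R ^ DIM('a)"
  have V0: "V \<ge> 0" unfolding V_def using R(1) by (simp add: unit_ball_vol_nonneg)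
  have emV: "emeasure lborel (cball (0::'a) R) = ennreal V" unfolding V_def by (rule emeasure_cball[OF R(1)])
  define \<delta> where "\<delta> = \<epsilon> * (2 * (V + 1)) powr (- 1 / P)"
  have d0: "\<delta> > 0" unfolding \<delta>_def using e V0 by simp
  have dP: "\<delta> powr P = \<epsilon> powr P / (2 * (V + 1))"
  proof -
    define c where "c = 2 * (V + 1)"
    have c0: "c > 0" unfolding c_def using V0 by simp
    have "\<delta> powr P = \<epsilon> powr P * (c powr (- 1 / P)) powr P"
      unfolding \<delta>_def c_def using e V0 by (simp add: powr_mult)
    also have "(c powr (- 1 / P)) powr P = c powr (-1)" using P1 by (simp add: powr_powr)
    also have "c powr (-1) = 1 / c" using c0 by (simp add: powr_minus divide_inverse)
    finally show ?thesis unfolding c_def by simp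
  qed
  have dPV: "\<delta> powr P * V < \<epsilon> powr P / 2"
    unfolding dP using e V0 by (simp add: field_simps)
  obtain h where h: "pw_linear_convex h" "\<forall>x. h x \<le> f x" "\<forall>x. u0 \<bullet> x + b0 \<le> h x"
    "\<forall>x\<in>cball 0 R. f x - h x < \<delta>" "\<exists>L>0. \<forall>t>0. modcont h t UNIV \<le> ereal (L * t)"
    using approx[OF cv ct m0 d0, of R] by auto
  have pt: "ennreal (\<bar>(f x - h x) * W \<alpha> x\<bar> powr P) \<le>
     ennreal (\<delta> powr P) * indicator (cball 0 R) x + G x * indicator (- cball 0 R) x" for x
  proof (cases "x \<in> cball 0 R")
    case True
    then have "f x - h x < \<delta>" using h(4) by auto
    then have "\<bar>(f x - h x) * W \<alpha> x\<bar> powr P \<le> \<delta> powr P"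
      using err_bounds[OF h(2,3), of x \<alpha>] P1 by (intro powr_mono2) auto
    then show ?thesis using True by (simp add: ennreal_leI)
  next
    case False
    have "\<bar>(f x - h x) * W \<alpha> x\<bar> powr P \<le> ((f x - (u0 \<bullet> x + b0)) * W \<alpha> x) powr P"
      using err_bounds[OF h(2,3), of x \<alpha>] P1 by (intro powr_mono2) auto
    then show ?thesis using False by (simp add: ennreal_leI G_def)
  qed
  define I where "I = (\<integral>\<^sup>+ x. ennreal (\<bar>(f x - h x) * W \<alpha> x\<bar> powr enn2real p) \<partial>lebesgue)"
  have "I = (\<integral>\<^sup>+ x. ennreal (\<bar>(f x - h x) * W \<alpha> x\<bar> powr P) \<partial>lborel)"
    unfolding I_def P_def by (simp add: nn_integral_completion)
  also have "\<dots> \<le> (\<integral>\<^sup>+ x. ennreal (\<delta> powr P) * indicator (cball 0 R) x + G x * indicator (- cball 0 R) x \<partial>lborel)"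
    by (intro nn_integral_mono pt)
  also have "\<dots> = (\<integral>\<^sup>+ x. ennreal (\<delta> powr P) * indicator (cball (0::'a) R) x \<partial>lborel) + (\<integral>\<^sup>+ x. G x * indicator (- cball 0 R) x \<partial>lborel)"
  proof (rule nn_integral_add)
    show "(\<lambda>x. ennreal (\<delta> powr P) * indicator (cball (0::'a) R) x) \<in> borel_measurable lborel"
      by (intro borel_measurable_times_ennreal borel_measurable_indicator borel_measurable_const) auto
    show "(\<lambda>x. G x * indicator (- cball 0 R) x) \<in> borel_measurable lborel"
      using Gm by (intro borel_measurable_times_ennreal borel_measurable_indicator) auto
  qed
  also have "(\<integral>\<^sup>+ x. ennreal (\<delta> powr P) * indicator (cball (0::'a) R) x \<partial>lborel) = ennreal (\<delta> powr P * V)"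
    using V0 by (simp add: nn_integral_cmult_indicator emV ennreal_mult)
  also have "ennreal (\<delta> powr P * V) + (\<integral>\<^sup>+ x. G x * indicator (- cball 0 R) x \<partial>lborel) < ennreal (\<epsilon> powr P / 2 + \<epsilon> powr P / 2)"
    by (subst add.commute, intro add_mono_ennreal R(2)) (use dPV V0 e in \<open>intro ennreal_lessI, simp_all\<close>)
  finally have Ilt: "I < ennreal (\<epsilon> powr P)" by simp
  then have Ifin: "I \<noteq> \<infinity>" by (metis ennreal_less_top infinity_ennreal_def less_imp_neq order.strict_trans)
  have "enn2real I < \<epsilon> powr P" using Ilt Ifin by (simp add: less_top)
  then have "enn2real I powr (1 / P) < (\<epsilon> powr P) powr (1 / P)"
    using P1 by (intro powr_less_mono2) auto
  also have "\<dots> = \<epsilon>" using e P1 by (simp add: powr_powr)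
  finally have "ennreal (enn2real I powr (1 / P)) < ennreal \<epsilon>" using e by (intro ennreal_lessI) auto
  then have "Lp_norm p (\<lambda>x. (f x - h x) * W \<alpha> x) < ennreal \<epsilon>"
    unfolding Lp_norm_def using pinf Ifin by (simp add: I_def[symmetric] P_def Let_def)
  then show ?thesis using h(1,5) by blast
qed


theorem lemma3:
  fixes f :: "'a::euclidean_space \<Rightarrow> real" and p :: ennreal and \<alpha> :: real
  assumes "convex_on UNIV f"
    and "1 \<le> p" and "1 \<le> \<alpha>"
    and "p \<noteq> \<infinity> \<Longrightarrow> in_Lp (enn2real p) (\<lambda>x. f x * W \<alpha> x)"
    and "p = \<infinity> \<Longrightarrow> continuous_on UNIV f \<and> ((\<lambda>x. f x * W \<alpha> x) \<longlongrightarrow> 0) at_infinity"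
  shows "\<forall>\<epsilon>>0. \<exists>h. pw_linear_convex h \<and>
           Lp_norm p (\<lambda>x. (f x - h x) * W \<alpha> x) < ennreal \<epsilon> \<and>
           (\<exists>L>0. \<forall>t>0. modcont h t UNIV \<le> ereal (L * t))"
proof (intro allI impI)
  fix \<epsilon> :: real assume e: "\<epsilon> > 0"
  show "\<exists>h. pw_linear_convex h \<and> Lp_norm p (\<lambda>x. (f x - h x) * W \<alpha> x) < ennreal \<epsilon> \<and>
           (\<exists>L>0. \<forall>t>0. modcont h t UNIV \<le> ereal (L * t))"
  proof (cases "p = \<infinity>")
    case True
    then show ?thesis using case_inf[OF assms(1,3) _ e] assms(5) by simp
  next
    case False
    then show ?thesis using case_fin[OF assms(1,3) False assms(2) assms(4)[OF False] e] by simp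
  qed
qed

end
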